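(* Let $A\in\mathbb{R}^{r\times(r+1)}$ have full row rank $r$. Let $T$ be an ordered subset of $r$ elements of $\{1,\dots,r+1\}$ such that $\tilde A:=A[:,T]$ is nonsingular and minimizes $\|\tilde A^{-1}\|_1$ among all nonsingular $r\times r$ submatrices of $A$. Let $H\in\mathbb{R}^{(r+1)\times r}$ be the matrix whose rows indexed by $T$ are given by $\tilde A^{-1}$ and whose remaining row is zero. Then $H$ is an ah-symmetric reflexive generalized inverse of $A$ satisfying $\|H\|_1\le\frac{2r}{r+1}\|H_{opt}\|_1$, where $H_{opt}$ is an optimal solution of $\min\{\|H\|_1 : AH=I_r\}$ (which equals $\min\{\|H\|_1: AHA=A\}$ and $\min\{\|H\|_1 : AHA=A,\ HAH=H,\ (AH)^\top=AH\}$).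
   Context: $A[:,T]$ is the submatrix of $A$ formed by the columns indexed by $T$. $\|H\|_1=\sum_{i,j}|H_{ij}|$. $H$ is a generalized inverse of $A$ if $AHA=A$, reflexive if additionally $HAH=H$, and ah-symmetric if $AH$ is symmetric. *)

theory Defs
  imports "Jordan_Normal_Form.DL_Rank"
begin

definition norm1_mat :: "real mat \<Rightarrow> real" where
  "norm1_mat H = (\<Sum>i<dim_row H. \<Sum>j<dim_col H. \<bar>H $$ (i, j)\<bar>)"

definition col_submat :: "'a mat \<Rightarrow> nat list \<Rightarrow> 'a mat" where
  "col_submat A T = mat (dim_row A) (length T) (\<lambda>(i, j). A $$ (i, T ! j))"

text \<open>Inverse of a square matrix (meaningful when it is nonsingular).\<close>
definition inv_mat :: "'a :: field mat \<Rightarrow> 'a mat" where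
  "inv_mat M = (THE B. B \<in> carrier_mat (dim_row M) (dim_row M) \<and>
                      M * B = 1\<^sub>m (dim_row M) \<and> B * M = 1\<^sub>m (dim_row M))"

definition adm_cols :: "nat \<Rightarrow> nat list \<Rightarrow> bool" where
  "adm_cols r T \<longleftrightarrow> distinct T \<and> length T = r \<and> set T \<subseteq> {0..<r+1}"

definition lift_rows :: "nat \<Rightarrow> nat list \<Rightarrow> real mat \<Rightarrow> real mat" where
  "lift_rows m T B = mat m (dim_col B)
     (\<lambda>(i, j). if i \<in> set T then B $$ (THE k. k < length T \<and> T ! k = i, j) else 0)"

end

theory Submission imports Defs begin

lemma inv_exists:
  fixes M :: "real mat"
  assumes M: "M \<in> carrier_mat n n" and d: "det M \<noteq> 0"
  shows "\<exists>B \<in> carrier_mat n n. M * B = 1\<^sub>m n"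
proof -
  have "M \<in> Units (ring_mat TYPE(real) n ())" by (rule det_non_zero_imp_unit[OF M d])
  thus ?thesis unfolding Units_def ring_mat_def by auto
qed

lemma inv_mat_eq:
  fixes M B :: "real mat"
  assumes M: "M \<in> carrier_mat n n" and B: "B \<in> carrier_mat n n" and MB: "M * B = 1\<^sub>m n"
  shows "inv_mat M = B \<and> det M \<noteq> 0"
proof -
  have BM: "B * M = 1\<^sub>m n" by (rule mat_mult_left_right_inverse[OF M B MB])
  have dr: "dim_row M = n" using M by auto
  have "inv_mat M = B" unfolding inv_mat_def dr
  proof (rule the_equality)
    show "B \<in> carrier_mat n n \<and> M * B = 1\<^sub>m n \<and> B * M = 1\<^sub>m n" using B MB BM by auto
    fix C assume C: "C \<in> carrier_mat n n \<and> M * C = 1\<^sub>m n \<and> C * M = 1\<^sub>m n"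
    have "C = C * (M * B)" using C MB by (metis right_mult_one_mat)
    also have "\<dots> = (C * M) * B" using C M B by (metis assoc_mult_mat)
    also have "\<dots> = B" using C B by (metis left_mult_one_mat)
    finally show "C = B" .
  qed
  moreover have "det M * det B = 1" using det_mult[OF M B] MB by simp
  hence "det M \<noteq> 0" by auto
  ultimately show ?thesis by simp
qed

lemma reindex_sum:
  fixes f :: "nat \<Rightarrow> real"
  assumes dT: "distinct T" and sT: "set T \<subseteq> {0..<n}"
    and z: "\<And>m. m < n \<Longrightarrow> m \<notin> set T \<Longrightarrow> f m = 0"
  shows "(\<Sum>l<length T. f (T ! l)) = (\<Sum>m<n. f m)"
proof -
  have "(\<Sum>l<length T. f (T ! l)) = (\<Sum>m\<in>set T. f m)"
    using sum.reindex_bij_betw[OF bij_betw_nth[OF dT refl refl], of f] by simp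
  also have "\<dots> = (\<Sum>m<n. f m)"
    by (rule sum.mono_neutral_left) (use sT z in auto)
  finally show ?thesis .
qed

definition rest :: "nat list \<Rightarrow> real mat \<Rightarrow> real mat" where
  "rest T G = mat (length T) (dim_col G) (\<lambda>(i,j). G $$ (T ! i, j))"

lemma rest_mult:
  fixes A G :: "real mat"
  assumes A: "A \<in> carrier_mat r n" and G: "G \<in> carrier_mat n c"
    and dT: "distinct T" and sT: "set T \<subseteq> {0..<n}"
    and z: "\<And>m j. m < n \<Longrightarrow> m \<notin> set T \<Longrightarrow> j < c \<Longrightarrow> G $$ (m, j) = 0"
  shows "col_submat A T * rest T G = A * G"
proof (rule eq_matI)
  fix i j assume i: "i < dim_row (A * G)" and j: "j < dim_col (A * G)"
  have "(col_submat A T * rest T G) $$ (i, j) = (\<Sum>l<length T. A $$ (i, T ! l) * G $$ (T ! l, j))"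
    using i j A G unfolding col_submat_def rest_def
    by (auto simp: scalar_prod_def lessThan_atLeast0 intro!: sum.cong)
  also have "\<dots> = (\<Sum>m<n. A $$ (i, m) * G $$ (m, j))"
    by (rule reindex_sum[OF dT sT]) (use z j G in auto)
  also have "\<dots> = (A * G) $$ (i, j)"
    using i j A G by (auto simp: scalar_prod_def lessThan_atLeast0 intro!: sum.cong)
  finally show "(col_submat A T * rest T G) $$ (i, j) = (A * G) $$ (i, j)" .
qed (use A G in \<open>auto simp: col_submat_def rest_def\<close>)

lemma rest_norm:
  assumes G: "G \<in> carrier_mat n c"
    and dT: "distinct T" and sT: "set T \<subseteq> {0..<n}"
    and z: "\<And>m j. m < n \<Longrightarrow> m \<notin> set T \<Longrightarrow> j < c \<Longrightarrow> G $$ (m, j) = 0"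
  shows "norm1_mat (rest T G) = norm1_mat G"
proof -
  have "norm1_mat (rest T G) = (\<Sum>l<length T. (\<lambda>m. \<Sum>j<c. \<bar>G $$ (m, j)\<bar>) (T ! l))"
    using G unfolding norm1_mat_def rest_def by auto
  also have "\<dots> = (\<Sum>m<n. \<Sum>j<c. \<bar>G $$ (m, j)\<bar>)"
    by (rule reindex_sum[OF dT sT]) (use z in auto)
  also have "\<dots> = norm1_mat G" using G unfolding norm1_mat_def by auto
  finally show ?thesis .
qed

lemma lift_props:
  fixes B :: "real mat"
  assumes B: "B \<in> carrier_mat r c" and dT: "distinct T" and lT: "length T = r"
  shows "lift_rows n T B \<in> carrier_mat n c"
    "\<And>m j. m < n \<Longrightarrow> m \<notin> set T \<Longrightarrow> j < c \<Longrightarrow> lift_rows n T B $$ (m, j) = 0"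
    "set T \<subseteq> {0..<n} \<Longrightarrow> rest T (lift_rows n T B) = B"
proof -
  show "lift_rows n T B \<in> carrier_mat n c" using B unfolding lift_rows_def by auto
  show "\<And>m j. m < n \<Longrightarrow> m \<notin> set T \<Longrightarrow> j < c \<Longrightarrow> lift_rows n T B $$ (m, j) = 0"
    using B unfolding lift_rows_def by auto
  assume sT: "set T \<subseteq> {0..<n}"
  show "rest T (lift_rows n T B) = B"
  proof (rule eq_matI)
    fix i j assume i: "i < dim_row B" and j: "j < dim_col B"
    have iT: "T ! i < n" using sT i B lT nth_mem by fastforce
    have th: "(THE k. k < length T \<and> T ! k = T ! i) = i"
      using dT i B lT by (auto simp: nth_eq_iff_index_eq)
    show "rest T (lift_rows n T B) $$ (i, j) = B $$ (i, j)"
      using i j B lT iT th unfolding rest_def lift_rows_def by auto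
  qed (use B lT in \<open>auto simp: rest_def lift_rows_def\<close>)
qed


lemma mult_entry:
  fixes A G :: "real mat"
  assumes "A \<in> carrier_mat p n" "G \<in> carrier_mat n q" "i < p" "j < q"
  shows "(A * G) $$ (i, j) = (\<Sum>m<n. A $$ (i, m) * G $$ (m, j))"
  using assms by (auto simp: scalar_prod_def lessThan_atLeast0 intro!: sum.cong)

lemma pointwise:
  fixes x a b D m :: real
  assumes x: "0 \<le> x" and a: "0 \<le> a" and b: "0 < b" and D: "0 < D"
    and h: "b * x \<le> (D - 2 * x) * a"
  shows "b * (m^2 * x - 2 * D) \<le> (m - 2)^2 * D * a"
proof -
  have lt: "2 * x < D"
  proof (rule ccontr)
    assume "\<not> 2 * x < D"
    hence "(D - 2 * x) * a \<le> 0" using a by (simp add: mult_nonpos_nonneg)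
    moreover have "0 < x" using \<open>\<not> 2 * x < D\<close> D by linarith
    ultimately show False using h b by (smt (verit) mult_pos_pos)
  qed
  have key: "(m - 2)^2 * D * x - (m^2 * x - 2 * D) * (D - 2 * x) = 2 * (m * x - D)^2"
    by (simp add: power2_eq_square algebra_simps)
  have "b * (m^2 * x - 2 * D) * (D - 2 * x) \<le> (m - 2)^2 * D * (b * x)"
  proof -
    have "0 \<le> b * (2 * (m * x - D)^2)" using b by simp
    moreover have "(m - 2)^2 * D * (b * x) - b * (m^2 * x - 2 * D) * (D - 2 * x) = b * (2 * (m * x - D)^2)"
      by (simp add: power2_eq_square algebra_simps)
    ultimately show ?thesis by linarith
  qed
  also have "\<dots> \<le> (m - 2)^2 * D * ((D - 2 * x) * a)"
    using h D by (intro mult_left_mono) auto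
  finally have "b * (m^2 * x - 2 * D) * (D - 2 * x) \<le> ((m - 2)^2 * D * a) * (D - 2 * x)"
    by (simp add: algebra_simps)
  thus ?thesis using lt by (simp add: mult_le_cancel_right)
qed


lemma main_bound:
  fixes A G :: "real mat" and d :: "nat \<Rightarrow> real" and \<alpha> :: real
  assumes A: "A \<in> carrier_mat r (r + 1)" and G: "G \<in> carrier_mat (r + 1) r"
    and AG: "A * G = 1\<^sub>m r"
    and Ad: "\<And>i. i < r \<Longrightarrow> (\<Sum>m<r+1. A $$ (i, m) * d m) = 0"
    and k: "k < r + 1" and dk: "d k \<noteq> 0"
    and mini: "\<And>G' t. G' \<in> carrier_mat (r + 1) r \<Longrightarrow> A * G' = 1\<^sub>m r \<Longrightarrow> t < r + 1 \<Longrightarrow>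
                 (\<forall>j<r. G' $$ (t, j) = 0) \<Longrightarrow> \<alpha> \<le> norm1_mat G'"
  shows "\<alpha> \<le> (2 * real r / (real r + 1)) * norm1_mat G"
proof -
  define n where "n = r + 1"
  define a where "a i = (\<Sum>j<r. \<bar>G $$ (i, j)\<bar>)" for i
  define N where "N = norm1_mat G"
  define D where "D = (\<Sum>i<n. \<bar>d i\<bar>)"
  have N: "N = (\<Sum>i<n. a i)" using G unfolding N_def norm1_mat_def a_def n_def by auto
  have a0: "\<And>i. 0 \<le> a i" unfolding a_def by (simp add: sum_nonneg)
  have N0: "0 \<le> N" unfolding N by (simp add: sum_nonneg a0)
  have D0: "0 < D"
  proof -
    have "\<bar>d k\<bar> \<le> D" unfolding D_def using k n_def
      by (intro member_le_sum) auto
    thus ?thesis using dk by simp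
  qed
  have ineq: "\<alpha> * \<bar>d t\<bar> \<le> \<bar>d t\<bar> * N - 2 * \<bar>d t\<bar> * a t + D * a t" if t: "t < n" for t
  proof (cases "d t = 0")
    case True thus ?thesis using D0 a0[of t] by simp
  next
    case False
    define Gt where "Gt = mat n r (\<lambda>(i, j). G $$ (i, j) - d i * G $$ (t, j) / d t)"
    have Gtc: "Gt \<in> carrier_mat (r + 1) r" unfolding Gt_def n_def by auto
    have AGt: "A * Gt = 1\<^sub>m r"
    proof (rule eq_matI)
      fix i j assume i: "i < dim_row (1\<^sub>m r :: real mat)" and j: "j < dim_col (1\<^sub>m r :: real mat)"
      have "(A * Gt) $$ (i, j) = (\<Sum>m<n. A $$ (i, m) * Gt $$ (m, j))"
        using mult_entry[OF A Gtc, of i j] i j n_def by simp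
      also have "\<dots> = (\<Sum>m<n. A $$ (i, m) * G $$ (m, j) - (A $$ (i, m) * d m) * (G $$ (t, j) / d t))"
        using j unfolding Gt_def by (intro sum.cong) (auto simp: algebra_simps)
      also have "\<dots> = (\<Sum>m<n. A $$ (i, m) * G $$ (m, j)) - (\<Sum>m<n. A $$ (i, m) * d m) * (G $$ (t, j) / d t)"
        by (simp only: sum_subtractf sum_distrib_right)
      also have "\<dots> = (A * G) $$ (i, j)"
        using mult_entry[OF A G, of i j] i j Ad[of i] n_def by simp
      finally show "(A * Gt) $$ (i, j) = 1\<^sub>m r $$ (i, j)" using AG by simp
    qed (use A Gtc in auto)
    have "\<alpha> \<le> norm1_mat Gt"
      by (rule mini[OF Gtc AGt, of t]) (use t False in \<open>auto simp: Gt_def n_def\<close>)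
    also have "norm1_mat Gt = (\<Sum>i<n. \<Sum>j<r. \<bar>G $$ (i, j) - d i * G $$ (t, j) / d t\<bar>)"
      unfolding norm1_mat_def Gt_def by simp
    also have "\<dots> \<le> (\<Sum>i<n. (a i + \<bar>d i\<bar> * a t / \<bar>d t\<bar>) - (if i = t then a t + \<bar>d t\<bar> * a t / \<bar>d t\<bar> else 0))"
    proof (rule sum_mono)
      fix i assume i: "i \<in> {..<n}"
      show "(\<Sum>j<r. \<bar>G $$ (i, j) - d i * G $$ (t, j) / d t\<bar>) \<le> (a i + \<bar>d i\<bar> * a t / \<bar>d t\<bar>) - (if i = t then a t + \<bar>d t\<bar> * a t / \<bar>d t\<bar> else 0)"
      proof (cases "i = t")
        case True thus ?thesis using False by simp
      next
        case ne: False
        have "(\<Sum>j<r. \<bar>G $$ (i, j) - d i * G $$ (t, j) / d t\<bar>) \<le> (\<Sum>j<r. \<bar>G $$ (i, j)\<bar> + \<bar>d i\<bar> / \<bar>d t\<bar> * \<bar>G $$ (t, j)\<bar>)"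
          by (rule sum_mono) (simp add: abs_mult abs_divide order_trans[OF abs_triangle_ineq4])
        also have "\<dots> = a i + \<bar>d i\<bar> * a t / \<bar>d t\<bar>"
          unfolding a_def by (simp add: sum.distrib sum_distrib_left sum_divide_distrib)
        finally show ?thesis using ne by simp
      qed
    qed
    also have "\<dots> = N + D * a t / \<bar>d t\<bar> - 2 * a t"
      using t False unfolding N D_def
      by (simp add: sum_subtractf sum.distrib sum_divide_distrib[symmetric] sum_distrib_right[symmetric])
    finally have "\<alpha> \<le> N + D * a t / \<bar>d t\<bar> - 2 * a t" .
    hence "\<alpha> * \<bar>d t\<bar> \<le> (N + D * a t / \<bar>d t\<bar> - 2 * a t) * \<bar>d t\<bar>"
      by (rule mult_right_mono) simp
    thus ?thesis using False by (simp add: algebra_simps)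
  qed
  show ?thesis
  proof (cases "\<alpha> \<le> N")
    case True
    show ?thesis
    proof (cases "r = 0")
      case True
      have "\<alpha> \<le> norm1_mat G" by (rule mini[OF G AG, of 0]) (use True in auto)
      also have "norm1_mat G = 0" using G True unfolding norm1_mat_def by simp
      finally show ?thesis using True by simp
    next
      case False
      have "1 \<le> 2 * real r / (real r + 1)" using False by (simp add: field_simps)
      hence "1 * N \<le> (2 * real r / (real r + 1)) * N" using N0 by (rule mult_right_mono)
      thus ?thesis using True unfolding N_def by linarith
    qed
  next
    case False
    define b where "b = \<alpha> - N"
    have b0: "0 < b" using False b_def by simp
    have ib: "b * \<bar>d t\<bar> \<le> (D - 2 * \<bar>d t\<bar>) * a t" if "t < n" for t
      using ineq[OF that] unfolding b_def by (simp add: algebra_simps)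
    have r0: "r \<noteq> 0"
    proof
      assume "r = 0"
      have "\<alpha> \<le> norm1_mat G" by (rule mini[OF G AG, of 0]) (use \<open>r = 0\<close> in auto)
      thus False using False N_def by simp
    qed
    show ?thesis
    proof (cases "r = 1")
      case True
      have Dsum: "D = \<bar>d 0\<bar> + \<bar>d 1\<bar>" unfolding D_def n_def True by (simp add: numeral_2_eq_2)
      have False
      proof (cases "\<bar>d 1\<bar> \<le> \<bar>d 0\<bar>")
        case True
        have "b * \<bar>d 0\<bar> \<le> (D - 2 * \<bar>d 0\<bar>) * a 0" using ib[of 0] n_def by simp
        moreover have "(D - 2 * \<bar>d 0\<bar>) * a 0 \<le> 0" using True Dsum a0[of 0] by (simp add: mult_nonpos_nonneg)
        moreover have "0 < \<bar>d 0\<bar>" using True Dsum D0 by linarith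
        ultimately show False using b0 by (smt (verit) mult_pos_pos)
      next
        case False
        have "b * \<bar>d 1\<bar> \<le> (D - 2 * \<bar>d 1\<bar>) * a 1" using ib[of 1] n_def \<open>r = 1\<close> by simp
        moreover have "(D - 2 * \<bar>d 1\<bar>) * a 1 \<le> 0" using False Dsum a0[of 1] by (simp add: mult_nonpos_nonneg)
        moreover have "0 < \<bar>d 1\<bar>" using False Dsum D0 by linarith
        ultimately show False using b0 by (smt (verit) mult_pos_pos)
      qed
      thus ?thesis ..
    next
      case False
      have r2: "2 \<le> r" using False r0 by simp
      define m where "m = real n"
      have pw: "b * (m^2 * \<bar>d t\<bar> - 2 * D) \<le> (m - 2)^2 * D * a t" if "t < n" for t
        by (rule pointwise[OF _ a0 b0 D0]) (use ib[OF that] in \<open>auto simp: mult.commute\<close>)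
      have "(\<Sum>t<n. b * (m^2 * \<bar>d t\<bar> - 2 * D)) \<le> (\<Sum>t<n. (m - 2)^2 * D * a t)"
        by (rule sum_mono) (use pw in auto)
      moreover have "(\<Sum>t<n. b * (m^2 * \<bar>d t\<bar> - 2 * D)) = (\<Sum>t<n. (b * m^2) * \<bar>d t\<bar>) - (\<Sum>t<n. 2 * b * D)"
        by (simp only: sum_subtractf[symmetric] right_diff_distrib mult.assoc mult.left_commute)
      moreover have "(\<Sum>t<n. (b * m^2) * \<bar>d t\<bar>) = b * m^2 * D"
        unfolding D_def by (simp add: sum_distrib_left)
      moreover have "(\<Sum>t<n. 2 * b * D) = m * (2 * b * D)" unfolding m_def by simp
      moreover have "(\<Sum>t<n. (m - 2)^2 * D * a t) = (m - 2)^2 * D * N"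
        unfolding N by (simp add: sum_distrib_left)
      moreover have "b * (m^2 * D - 2 * D * m) = b * m^2 * D - m * (2 * b * D)"
        by (simp add: algebra_simps)
      ultimately have "b * (m^2 * D - 2 * D * m) \<le> (m - 2)^2 * D * N"
        by linarith
      hence "(b * m * (m - 2)) * D \<le> ((m - 2)^2 * N) * D"
        by (simp add: power2_eq_square algebra_simps)
      hence "b * m * (m - 2) \<le> (m - 2)^2 * N" using D0 by simp
      hence "(b * m) * (m - 2) \<le> ((m - 2) * N) * (m - 2)"
        by (simp add: power2_eq_square algebra_simps)
      moreover have "0 < m - 2" using r2 m_def n_def by simp
      ultimately have "b * m \<le> (m - 2) * N" by (simp add: mult.commute)
      hence "b \<le> (m - 2) * N / m" using m_def n_def by (simp add: field_simps)
      hence "\<alpha> \<le> N + (m - 2) * N / m" using b_def by simp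
      also have "\<dots> = (2 * real r / (real r + 1)) * N"
        using m_def n_def by (simp add: field_simps)
      finally show ?thesis unfolding N_def .
    qed
  qed
qed

theorem theorem6p3:
  fixes r :: nat and A :: "real mat" and T :: "nat list"
  assumes A_dim: "A \<in> carrier_mat r (r + 1)"
    and A_rank: "vec_space.rank r A = r"
    and T_adm: "adm_cols r T"
    and T_nonsing: "det (col_submat A T) \<noteq> 0"
    and T_min: "\<And>T'. adm_cols r T' \<Longrightarrow> det (col_submat A T') \<noteq> 0 \<Longrightarrow>
                 norm1_mat (inv_mat (col_submat A T)) \<le> norm1_mat (inv_mat (col_submat A T'))"
    and H_def: "H = lift_rows (r + 1) T (inv_mat (col_submat A T))"
  shows "A * H * A = A \<and> H * A * H = H \<and> transpose_mat (A * H) = A * H \<and>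
         (\<forall>H'. H' \<in> carrier_mat (r + 1) r \<longrightarrow> A * H' = 1\<^sub>m r \<longrightarrow>
                norm1_mat H \<le> (2 * real r / (real r + 1)) * norm1_mat H') \<and>
         (\<forall>H'. H' \<in> carrier_mat (r + 1) r \<longrightarrow> A * H' * A = A \<longrightarrow>
                norm1_mat H \<le> (2 * real r / (real r + 1)) * norm1_mat H')"
proof -
  define n where "n = r + 1"
  define M where "M = col_submat A T"
  have dT: "distinct T" and lT: "length T = r" and sT: "set T \<subseteq> {0..<r+1}"
    using T_adm unfolding adm_cols_def by auto
  have Mc: "M \<in> carrier_mat r r" using A_dim lT unfolding M_def col_submat_def by auto
  obtain B where Bc: "B \<in> carrier_mat r r" and MB: "M * B = 1\<^sub>m r"
    using inv_exists[OF Mc T_nonsing[folded M_def]] by blast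
  have invM: "inv_mat M = B" using inv_mat_eq[OF Mc Bc MB] by simp
  have Hdef: "H = lift_rows (r + 1) T B" using H_def invM M_def by simp
  have Hc: "H \<in> carrier_mat (r + 1) r" using lift_props(1)[OF Bc dT lT] Hdef by simp
  have Hz: "\<And>m j. m < r + 1 \<Longrightarrow> m \<notin> set T \<Longrightarrow> j < r \<Longrightarrow> H $$ (m, j) = 0"
    using lift_props(2)[OF Bc dT lT] Hdef by simp
  have Hrest: "rest T H = B" using lift_props(3)[OF Bc dT lT sT] Hdef by simp
  have AH: "A * H = 1\<^sub>m r"
    using rest_mult[OF A_dim Hc dT sT Hz] Hrest MB M_def by simp
  have P1: "A * H * A = A" using AH A_dim by simp
  have P2: "H * A * H = H"
  proof -
    have "H * A * H = H * (A * H)" using Hc A_dim by (metis assoc_mult_mat)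
    thus ?thesis using AH Hc by (metis right_mult_one_mat)
  qed
  have P3: "transpose_mat (A * H) = A * H" using AH by simp
  have normH: "norm1_mat H = norm1_mat (inv_mat (col_submat A T))"
    using rest_norm[OF Hc dT sT Hz] Hrest invM M_def by simp
  have mini: "norm1_mat H \<le> norm1_mat G'"
    if G'c: "G' \<in> carrier_mat (r + 1) r" and AG': "A * G' = 1\<^sub>m r" and t: "t < r + 1"
      and zr: "\<forall>j<r. G' $$ (t, j) = 0" for G' t
  proof -
    define T' where "T' = filter (\<lambda>x. x \<noteq> t) [0..<r+1]"
    have dT': "distinct T'" unfolding T'_def by simp
    have sT': "set T' = {0..<r+1} - {t}" unfolding T'_def by auto
    have lT': "length T' = r"
      using distinct_card[OF dT'] sT' t by simp
    have adm: "adm_cols r T'" unfolding adm_cols_def using dT' sT' lT' by auto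
    have z': "\<And>m j. m < r + 1 \<Longrightarrow> m \<notin> set T' \<Longrightarrow> j < r \<Longrightarrow> G' $$ (m, j) = 0"
      using zr sT' by auto
    have Mc': "col_submat A T' \<in> carrier_mat r r" using A_dim lT' unfolding col_submat_def by auto
    have Rc: "rest T' G' \<in> carrier_mat r r" using G'c lT' unfolding rest_def by auto
    have MR: "col_submat A T' * rest T' G' = 1\<^sub>m r"
      using rest_mult[OF A_dim G'c dT' _ z'] sT' AG' by auto
    have inv': "inv_mat (col_submat A T') = rest T' G'" and det': "det (col_submat A T') \<noteq> 0"
      using inv_mat_eq[OF Mc' Rc MR] by auto
    have "norm1_mat H \<le> norm1_mat (inv_mat (col_submat A T'))"
      using T_min[OF adm det'] normH by simp
    also have "\<dots> = norm1_mat G'" using inv' rest_norm[OF G'c dT' _ z'] sT' by auto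
    finally show ?thesis .
  qed
  have "card (set T) = r" using distinct_card[OF dT] lT by simp
  hence "set T \<noteq> {0..<r+1}" by (metis card_atLeastLessThan diff_zero n_not_Suc_n Suc_eq_plus1)
  then obtain k where "k \<in> {0..<r+1} - set T" using sT by blast
  hence k: "k < r + 1" and kT: "k \<notin> set T" by auto
  define d where "d m = (if m = k then 1 else 0) - (H * A) $$ (m, k)" for m
  have HAc: "H * A \<in> carrier_mat (r + 1) (r + 1)" using Hc A_dim by simp
  have dk: "d k \<noteq> 0"
  proof -
    have "(H * A) $$ (k, k) = (\<Sum>l<r. H $$ (k, l) * A $$ (l, k))"
      using mult_entry[OF Hc A_dim k k] .
    also have "\<dots> = 0" using Hz[OF k kT] by simp
    finally show ?thesis unfolding d_def by simp
  qed
  have Ad: "(\<Sum>m<r+1. A $$ (i, m) * d m) = 0" if i: "i < r" for i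
  proof -
    have "(\<Sum>m<r+1. A $$ (i, m) * d m) =
          (\<Sum>m<r+1. A $$ (i, m) * (if m = k then 1 else 0)) - (\<Sum>m<r+1. A $$ (i, m) * (H * A) $$ (m, k))"
      unfolding d_def by (simp add: right_diff_distrib sum_subtractf)
    also have "(\<Sum>m<r+1. A $$ (i, m) * (if m = k then 1 else 0)) = A $$ (i, k)"
      using k by (simp add: if_distrib cong: if_cong)
    also have "(\<Sum>m<r+1. A $$ (i, m) * (H * A) $$ (m, k)) = (A * (H * A)) $$ (i, k)"
      using mult_entry[OF A_dim HAc i k] by simp
    also have "A * (H * A) = A" using P1 A_dim Hc by (metis assoc_mult_mat)
    finally show ?thesis by simp
  qed
  have bound: "norm1_mat H \<le> (2 * real r / (real r + 1)) * norm1_mat G"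
    if G'c: "G \<in> carrier_mat (r + 1) r" and AG: "A * G = 1\<^sub>m r" for G
  proof (rule main_bound[where d=d, OF A_dim G'c AG Ad k dk])
    fix G' t assume "G' \<in> carrier_mat (r + 1) r" "A * G' = 1\<^sub>m r" "t < r + 1" "\<forall>j<r. G' $$ (t, j) = 0"
    thus "norm1_mat H \<le> norm1_mat G'" by (rule mini)
  qed
  have P5: "A * G = 1\<^sub>m r" if G'c: "G \<in> carrier_mat (r + 1) r" and AGA: "A * G * A = A" for G
  proof -
    have AGc: "A * G \<in> carrier_mat r r" using A_dim G'c by simp
    have "A * G = A * G * (A * H)" unfolding AH using right_mult_one_mat[OF AGc] by simp
    also have "\<dots> = (A * G * A) * H" using assoc_mult_mat[OF AGc A_dim Hc] by simp
    also have "\<dots> = 1\<^sub>m r" using AGA AH by simp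
    finally show ?thesis .
  qed
  show ?thesis using P1 P2 P3 bound P5 by blast
qed

end
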